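(* Let $(G_n)$ be a sequence of weighted graphs, $G_n$ on vertex set $[n]$ with edge weights $\beta_{ij}(n)$, with $\beta_{\max}=\sup_{i,j,n}\beta_{ij}(n)<\infty$ and $G_n\to W$ for an irreducible graphon $W$, and let $k\ge2$ be a constant. Then there is a constant $\sigma>0$ such that, for all sufficiently large $n$, at most $n/(10\beta_{\max})$ vertices $v$ of $G_n$ have weighted degree $d_v=\sum_w\beta_{vw}(n)$ less than $50k\beta_{\max}\sigma n$.
   Context: A weighted graph $G$ on a finite set $V$ is a symmetric function $(v,w)\mapsto\beta_{vw}$ from $V\times V$ to $[0,\infty)$ with $\beta_{vv}=0$. For a finite simple graph $F$ on $[k]$, $t(F,G)=|V|^{-k}\sum_{v_1,\dots,v_k\in V}\prod_{ij\in E(F)}\beta_{v_iv_j}$. A graphon is a bounded symmetric measurable $W:[0,1]^2\to[0,\infty)$, with $t(F,W)=\int\prod_{ij\in E(F)}W(x_i,x_j)\prod_i dx_i$; $G_n\to W$ means $t(F,G_n)\to t(F,W)$ for every finite simple graph $F$. $W$ is irreducible if there is no measurable $A\subset[0,1]$ with $0<\mu(A)<1$ and $W=0$ a.e. on $A\times A^c$. *)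

theory Defs
  imports "HOL-Analysis.Analysis"
begin

text \<open>A weighted graph on the vertex set [n] = {0..<n} is given by a weight function
  b :: nat => nat => real (only values on [n] x [n] matter).\<close>
definition weighted_graph :: "nat \<Rightarrow> (nat \<Rightarrow> nat \<Rightarrow> real) \<Rightarrow> bool" where
  "weighted_graph n b \<longleftrightarrow>
     (\<forall>i<n. \<forall>j<n. b i j \<ge> 0 \<and> b i j = b j i) \<and> (\<forall>i<n. b i i = 0)"

definition simple_graph :: "nat \<Rightarrow> (nat \<times> nat) set \<Rightarrow> bool" where
  "simple_graph m E \<longleftrightarrow> E \<subseteq> {(i, j). i < j \<and> j < m}"

definition hom_density_graph ::
  "nat \<Rightarrow> (nat \<times> nat) set \<Rightarrow> nat \<Rightarrow> (nat \<Rightarrow> nat \<Rightarrow> real) \<Rightarrow> real" where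
  "hom_density_graph m E n b =
     (\<Sum>v\<in>PiE {..<m} (\<lambda>_. {..<n}). \<Prod>(i, j)\<in>E. b (v i) (v j)) / real n ^ m"

definition hom_density_graphon ::
  "nat \<Rightarrow> (nat \<times> nat) set \<Rightarrow> (real \<Rightarrow> real \<Rightarrow> real) \<Rightarrow> real" where
  "hom_density_graphon m E W =
     integral\<^sup>L (PiM {..<m} (\<lambda>_. restrict_space lborel {0..1}))
       (\<lambda>x. \<Prod>(i, j)\<in>E. W (x i) (x j))"

definition unit_square :: "(real \<times> real) set" where
  "unit_square = {0..1} \<times> {0..1}"

definition graphon :: "(real \<Rightarrow> real \<Rightarrow> real) \<Rightarrow> bool" where
  "graphon W \<longleftrightarrow>
     (\<lambda>p. W (fst p) (snd p)) \<in> borel_measurable (restrict_space (lborel \<Otimes>\<^sub>M lborel) unit_square)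
     \<and> (\<forall>x\<in>{0..1}. \<forall>y\<in>{0..1}. W x y = W y x \<and> W x y \<ge> 0)
     \<and> (\<exists>B. \<forall>x\<in>{0..1}. \<forall>y\<in>{0..1}. W x y \<le> B)"

definition irreducible_graphon :: "(real \<Rightarrow> real \<Rightarrow> real) \<Rightarrow> bool" where
  "irreducible_graphon W \<longleftrightarrow>
     \<not> (\<exists>A. A \<in> sets lborel \<and> A \<subseteq> {0..1} \<and> 0 < measure lborel A \<and> measure lborel A < 1 \<and>
          (AE p in lborel \<Otimes>\<^sub>M lborel. p \<in> A \<times> ({0..1} - A) \<longrightarrow> W (fst p) (snd p) = 0))"

definition graph_seq_converges ::
  "(nat \<Rightarrow> nat \<Rightarrow> nat \<Rightarrow> real) \<Rightarrow> (real \<Rightarrow> real \<Rightarrow> real) \<Rightarrow> bool" where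
  "graph_seq_converges \<beta> W \<longleftrightarrow>
     (\<forall>m E. simple_graph m E \<longrightarrow>
        (\<lambda>n. hom_density_graph m E n (\<beta> n)) \<longlonglongrightarrow> hom_density_graphon m E W)"

definition beta_max :: "(nat \<Rightarrow> nat \<Rightarrow> nat \<Rightarrow> real) \<Rightarrow> real" where
  "beta_max \<beta> = Sup {\<beta> n i j | n i j. i < n \<and> j < n}"

definition wdeg :: "nat \<Rightarrow> (nat \<Rightarrow> nat \<Rightarrow> real) \<Rightarrow> nat \<Rightarrow> real" where
  "wdeg n b v = (\<Sum>w<n. b v w)"

end

theory Submission imports Defs "HOL-Probability.Probability_Measure" begin


lemma sum_PiE_insert:
  fixes F :: "(nat \<Rightarrow> nat) \<Rightarrow> real"
  assumes "j \<notin> I" "finite I"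
  shows "(\<Sum>v\<in>PiE (insert j I) (\<lambda>_. S). F v) = (\<Sum>a\<in>S. \<Sum>g\<in>PiE I (\<lambda>_. S). F (g(j:=a)))"
proof -
  have "(\<Sum>v\<in>PiE (insert j I) (\<lambda>_. S). F v) = (\<Sum>p\<in>S \<times> PiE I (\<lambda>_. S). F ((\<lambda>(y, g). g(j := y)) p))"
    unfolding PiE_insert_eq
    by (subst sum.reindex) (use inj_combinator[OF assms(1), of "\<lambda>_. S"] in auto)
  also have "\<dots> = (\<Sum>a\<in>S. \<Sum>g\<in>PiE I (\<lambda>_. S). F (g(j:=a)))"
    by (subst sum.cartesian_product) (auto simp: case_prod_beta)
  finally show ?thesis .
qed

lemma graph_star:
  assumes wg: "weighted_graph n b"
  shows "hom_density_graph (Suc j) ((\<lambda>i. (i,j)) ` {..<j}) n b = (\<Sum>a<n. (wdeg n b a / real n)^j) / real n"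
proof -
  have sym: "b w a = b a w" if "w < n" "a < n" for w a using wg that unfolding weighted_graph_def by auto
  have "(\<Sum>v\<in>PiE {..<Suc j} (\<lambda>_. {..<n}). \<Prod>(p, q)\<in>(\<lambda>i. (i,j)) ` {..<j}. b (v p) (v q))
      = (\<Sum>v\<in>PiE (insert j {..<j}) (\<lambda>_. {..<n}). \<Prod>i<j. b (v i) (v j))"
    by (subst prod.reindex) (auto simp: inj_on_def lessThan_Suc)
  also have "\<dots> = (\<Sum>a<n. \<Sum>g\<in>PiE {..<j} (\<lambda>_. {..<n}). \<Prod>i<j. b ((g(j:=a)) i) a)"
    by (subst sum_PiE_insert) auto
  also have "\<dots> = (\<Sum>a<n. \<Sum>g\<in>PiE {..<j} (\<lambda>_. {..<n}). \<Prod>i<j. b (g i) a)"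
    by (intro sum.cong prod.cong refl) auto
  also have "\<dots> = (\<Sum>a<n. \<Prod>i<j. \<Sum>w<n. b w a)"
    by (intro sum.cong refl, subst prod_sum_PiE) auto
  also have "\<dots> = (\<Sum>a<n. (wdeg n b a)^j)"
    unfolding wdeg_def by (intro sum.cong refl) (auto intro!: sum.cong simp: sym)
  finally have e: "(\<Sum>v\<in>PiE {..<Suc j} (\<lambda>_. {..<n}). \<Prod>(p, q)\<in>(\<lambda>i. (i,j)) ` {..<j}. b (v p) (v q)) = (\<Sum>a<n. (wdeg n b a)^j)" .
  show ?thesis unfolding hom_density_graph_def e
    by (simp add: power_divide sum_divide_distrib[symmetric] field_simps)
qed



lemma M_prob: "prob_space (restrict_space lborel {0..1::real})"
  by (rule prob_space_restrict_space) auto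

lemma space_M: "space (restrict_space lborel {0..1::real}) = {0..1}"
  by simp

lemma Wg_meas:
  assumes "graphon W"
  shows "(\<lambda>p. if p \<in> unit_square then W (fst p) (snd p) else 0) \<in> borel_measurable (lborel \<Otimes>\<^sub>M lborel)"
proof -
  have us: "unit_square \<in> sets (lborel \<Otimes>\<^sub>M lborel)"
    unfolding unit_square_def by (intro pair_measureI) auto
  have "(\<lambda>p. W (fst p) (snd p)) \<in> borel_measurable (restrict_space (lborel \<Otimes>\<^sub>M lborel) unit_square)"
    using assms unfolding graphon_def by auto
  then show ?thesis
    using measurable_restrict_space_iff[of unit_square "lborel \<Otimes>\<^sub>M lborel" 0 borel "\<lambda>p. W (fst p) (snd p)"] us
    by simp
qed

lemma Wm_meas:
  assumes "graphon W"
  shows "(\<lambda>p. W (fst p) (snd p)) \<in> borel_measurable (restrict_space lborel {0..1::real} \<Otimes>\<^sub>M restrict_space lborel {0..1::real})"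
proof -
  let ?M = "restrict_space lborel {0..1::real}"
  have id: "(\<lambda>p. p) \<in> measurable (?M \<Otimes>\<^sub>M ?M) (lborel \<Otimes>\<^sub>M lborel)"
  proof (rule measurable_pair)
    have i: "(\<lambda>x. x) \<in> measurable ?M lborel"
      by (intro measurable_restrict_space1 measurable_ident_sets) auto
    show "fst \<circ> (\<lambda>p. p) \<in> measurable (?M \<Otimes>\<^sub>M ?M) lborel"
      using measurable_comp[OF measurable_fst i] by (simp add: comp_def)
    show "snd \<circ> (\<lambda>p. p) \<in> measurable (?M \<Otimes>\<^sub>M ?M) lborel"
      using measurable_comp[OF measurable_snd i] by (simp add: comp_def)
  qed
  have "(\<lambda>p. if p \<in> unit_square then W (fst p) (snd p) else 0) \<in> borel_measurable (?M \<Otimes>\<^sub>M ?M)"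
    using measurable_comp[OF id Wg_meas[OF assms]] by (simp add: comp_def)
  then show ?thesis
    by (rule measurable_cong[THEN iffD1, rotated]) (auto simp: space_pair_measure unit_square_def)
qed

lemma comp_meas:
  assumes "graphon W" "i \<in> I" "k \<in> I"
  shows "(\<lambda>x. W (x i) (x k)) \<in> borel_measurable (PiM I (\<lambda>_. restrict_space lborel {0..1::real}))"
proof -
  have "(\<lambda>x. (x i, x k)) \<in> measurable (PiM I (\<lambda>_. restrict_space lborel {0..1::real}))
      (restrict_space lborel {0..1::real} \<Otimes>\<^sub>M restrict_space lborel {0..1::real})"
    using assms(2,3) by (intro measurable_Pair measurable_component_singleton)
  from measurable_comp[OF this Wm_meas[OF assms(1)]] show ?thesis by (simp add: comp_def)
qed

lemma graphon_star:
  assumes g: "graphon W"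
  defines "M \<equiv> restrict_space lborel {0..1::real}"
  shows "hom_density_graphon (Suc j) ((\<lambda>i. (i,j)) ` {..<j}) W = (\<integral>x. (\<integral>y. W y x \<partial>M)^j \<partial>M)"
proof -
  interpret P: prob_space M unfolding M_def by (rule M_prob)
  interpret PS: product_sigma_finite "\<lambda>_. M"
    unfolding product_sigma_finite_def using P.sigma_finite_measure_axioms by auto
  have spM[simp]: "space M = {0..1}" unfolding M_def by simp
  have nonneg: "0 \<le> W x y" if "x \<in> {0..1}" "y \<in> {0..1}" for x y
    using g that unfolding graphon_def by auto
  obtain Bw where Bw: "\<And>x y. x \<in> {0..1} \<Longrightarrow> y \<in> {0..1} \<Longrightarrow> W x y \<le> Bw"
    using g unfolding graphon_def by blast
  have Wm[measurable]: "(\<lambda>p. W (fst p) (snd p)) \<in> borel_measurable (M \<Otimes>\<^sub>M M)"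
    unfolding M_def by (rule Wm_meas[OF g])
  have Wsw: "case_prod (\<lambda>x y. W y x) \<in> borel_measurable (M \<Otimes>\<^sub>M M)"
  proof -
    have "(\<lambda>p. (snd p, fst p)) \<in> measurable (M \<Otimes>\<^sub>M M) (M \<Otimes>\<^sub>M M)" by measurable
    from measurable_comp[OF this Wm] show ?thesis by (simp add: comp_def case_prod_beta)
  qed
  have d_meas[measurable]: "(\<lambda>x. \<integral>y. W y x \<partial>M) \<in> borel_measurable M"
    using P.borel_measurable_lebesgue_integral[OF Wsw] .
  have Wy_meas: "(\<lambda>y. W y x) \<in> borel_measurable M" if "x \<in> {0..1}" for x
  proof -
    have "(\<lambda>y. (y, x)) \<in> measurable M (M \<Otimes>\<^sub>M M)" using that by (intro measurable_Pair2') auto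
    from measurable_comp[OF this Wm] show ?thesis by (simp add: comp_def)
  qed
  have Dn: "(\<integral>\<^sup>+y. ennreal (W y x) \<partial>M) = ennreal (\<integral>y. W y x \<partial>M)" if "x \<in> {0..1}" for x
  proof (rule nn_integral_eq_integral)
    show "integrable M (\<lambda>y. W y x)"
      by (rule P.integrable_const_bound[where B=Bw]) (use that nonneg Bw Wy_meas in auto)
    show "AE y in M. 0 \<le> W y x" using that nonneg by (auto intro!: AE_I2)
  qed
  have dnn: "0 \<le> (\<integral>y. W y x \<partial>M)" if "x \<in> {0..1}" for x
    using that nonneg by (intro integral_nonneg_AE) (auto intro!: AE_I2)
  have Fm: "(\<lambda>x. \<Prod>i<j. W (x i) (x j)) \<in> borel_measurable (PiM {..<Suc j} (\<lambda>_. M))"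
    unfolding M_def by (intro borel_measurable_prod comp_meas[OF g]) auto
  have Gm: "(\<lambda>x. \<Prod>i<j. ennreal (W (x i) (x j))) \<in> borel_measurable (PiM (insert j {..<j}) (\<lambda>_. M))"
    unfolding M_def by (intro borel_measurable_prod_ennreal measurable_compose[OF comp_meas[OF g]]) auto
  have "hom_density_graphon (Suc j) ((\<lambda>i. (i,j)) ` {..<j}) W = (\<integral>x. (\<Prod>i<j. W (x i) (x j)) \<partial>PiM {..<Suc j} (\<lambda>_. M))"
    unfolding hom_density_graphon_def M_def
    by (intro Bochner_Integration.integral_cong refl, subst prod.reindex) (auto simp: inj_on_def)
  also have "\<dots> = enn2real (\<integral>\<^sup>+x. ennreal (\<Prod>i<j. W (x i) (x j)) \<partial>PiM {..<Suc j} (\<lambda>_. M))"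
    by (rule integral_eq_nn_integral[OF Fm], rule AE_I2)
       (auto simp: space_PiM PiE_def Pi_def intro!: prod_nonneg nonneg)
  also have "(\<integral>\<^sup>+x. ennreal (\<Prod>i<j. W (x i) (x j)) \<partial>PiM {..<Suc j} (\<lambda>_. M))
      = (\<integral>\<^sup>+x. (\<Prod>i<j. ennreal (W (x i) (x j))) \<partial>PiM (insert j {..<j}) (\<lambda>_. M))"
    by (simp add: lessThan_Suc, intro nn_integral_cong prod_ennreal[symmetric])
       (auto simp: space_PiM PiE_def Pi_def intro!: nonneg)
  also have "\<dots> = (\<integral>\<^sup>+ y. (\<integral>\<^sup>+ x. (\<Prod>i<j. ennreal (W ((x(j := y)) i) ((x(j := y)) j))) \<partial>PiM {..<j} (\<lambda>_. M)) \<partial>M)"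
    by (rule PS.product_nn_integral_insert_rev[OF _ _ Gm]) auto
  also have "\<dots> = (\<integral>\<^sup>+ y. (\<integral>\<^sup>+ x. (\<Prod>i<j. ennreal (W (x i) y)) \<partial>PiM {..<j} (\<lambda>_. M)) \<partial>M)"
    by (intro nn_integral_cong prod.cong refl) auto
  also have "\<dots> = (\<integral>\<^sup>+ y. (\<Prod>i<j. (\<integral>\<^sup>+ x. ennreal (W x y) \<partial>M)) \<partial>M)"
    by (intro nn_integral_cong PS.product_nn_integral_prod) (auto intro!: measurable_compose[OF Wy_meas])
  also have "\<dots> = (\<integral>\<^sup>+ y. ennreal ((\<integral>x. W x y \<partial>M)^j) \<partial>M)"
    by (intro nn_integral_cong) (auto simp: Dn dnn ennreal_power)
  also have "enn2real \<dots> = (\<integral>x. (\<integral>y. W y x \<partial>M)^j \<partial>M)"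
    by (rule integral_eq_nn_integral[symmetric]) (auto intro!: AE_I2 dnn zero_le_power)
  finally show ?thesis .
qed

lemma d_pos:
  assumes g: "graphon W" and irr: "irreducible_graphon W"
  defines "M \<equiv> restrict_space lborel {0..1::real}"
  shows "AE x in M. 0 < (\<integral>y. W y x \<partial>M)"
proof (rule ccontr)
  assume nAE: "\<not> (AE x in M. 0 < (\<integral>y. W y x \<partial>M))"
  interpret P: prob_space M unfolding M_def by (rule M_prob)
  have PSF: "pair_sigma_finite lborel lborel"
    by (simp add: pair_sigma_finite_def lborel.sigma_finite_measure_axioms)
  have spM[simp]: "space M = {0..1}" unfolding M_def by simp
  have nonneg: "0 \<le> W x y" if "x \<in> {0..1}" "y \<in> {0..1}" for x y
    using g that unfolding graphon_def by auto
  have symW: "W x y = W y x" if "x \<in> {0..1}" "y \<in> {0..1}" for x y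
    using g that unfolding graphon_def by auto
  obtain Bw where Bw: "\<And>x y. x \<in> {0..1} \<Longrightarrow> y \<in> {0..1} \<Longrightarrow> W x y \<le> Bw"
    using g unfolding graphon_def by blast
  have Wm[measurable]: "(\<lambda>p. W (fst p) (snd p)) \<in> borel_measurable (M \<Otimes>\<^sub>M M)"
    unfolding M_def by (rule Wm_meas[OF g])
  have Wsw: "case_prod (\<lambda>x y. W y x) \<in> borel_measurable (M \<Otimes>\<^sub>M M)"
  proof -
    have "(\<lambda>p. (snd p, fst p)) \<in> measurable (M \<Otimes>\<^sub>M M) (M \<Otimes>\<^sub>M M)" by measurable
    from measurable_comp[OF this Wm] show ?thesis by (simp add: comp_def case_prod_beta)
  qed
  have d_meas[measurable]: "(\<lambda>x. \<integral>y. W y x \<partial>M) \<in> borel_measurable M"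
    using P.borel_measurable_lebesgue_integral[OF Wsw] .
  have Wy_meas: "(\<lambda>y. W y x) \<in> borel_measurable M" if "x \<in> {0..1}" for x
  proof -
    have "(\<lambda>y. (y, x)) \<in> measurable M (M \<Otimes>\<^sub>M M)" using that by (intro measurable_Pair2') auto
    from measurable_comp[OF this Wm] show ?thesis by (simp add: comp_def)
  qed
  have Wy_int: "integrable M (\<lambda>y. W y x)" if "x \<in> {0..1}" for x
    by (rule P.integrable_const_bound[where B=Bw]) (use that nonneg Bw Wy_meas in auto)
  have dnn: "0 \<le> (\<integral>y. W y x \<partial>M)" if "x \<in> {0..1}" for x
    using that nonneg by (intro integral_nonneg_AE) (auto intro!: AE_I2)
  define A where "A = {x\<in>space M. (\<integral>y. W y x \<partial>M) = 0}"
  have Asets: "A \<in> sets M" unfolding A_def by measurable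
  have "{x\<in>space M. \<not> 0 < (\<integral>y. W y x \<partial>M)} = A"
    unfolding A_def using dnn by force
  from AE_iff_measurable[OF Asets this] nAE have "emeasure M A \<noteq> 0" by simp
  hence mA: "0 < measure M A"
    by (simp add: P.emeasure_eq_measure zero_less_measure_iff)
  have sets_iff: "B \<in> sets M \<longleftrightarrow> B \<subseteq> {0..1} \<and> B \<in> sets lborel" for B
    unfolding M_def by (subst sets_restrict_space_iff) auto
  have key: False if B: "B \<in> sets M" "B \<subseteq> A" "0 < measure M B" "measure M B < 1" for B
  proof -
    have Bl: "B \<in> sets lborel" "B \<subseteq> {0..1}" using sets_iff B by auto
    have mB: "measure lborel B = measure M B"
      unfolding M_def by (rule measure_restrict_space[symmetric]) (use Bl in auto)
    have Wg[measurable]: "(\<lambda>p. if p \<in> unit_square then W (fst p) (snd p) else 0) \<in> borel_measurable (lborel \<Otimes>\<^sub>M lborel)"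
      by (rule Wg_meas[OF g])
    have BB[measurable]: "B \<times> ({0..1} - B) \<in> sets (lborel \<Otimes>\<^sub>M lborel)"
      using Bl by (intro pair_measureI) auto
    have eqset: "{p\<in>space (lborel \<Otimes>\<^sub>M lborel). p \<in> B \<times> ({0..1} - B) \<longrightarrow> W (fst p) (snd p) = 0}
       = {p\<in>space (lborel \<Otimes>\<^sub>M lborel). p \<in> B \<times> ({0..1} - B) \<longrightarrow> (if p \<in> unit_square then W (fst p) (snd p) else 0) = 0}"
      using Bl by (auto simp: unit_square_def)
    have "{p\<in>space (lborel \<Otimes>\<^sub>M lborel). p \<in> B \<times> ({0..1} - B) \<longrightarrow> (if p \<in> unit_square then W (fst p) (snd p) else 0) = 0} \<in> sets (lborel \<Otimes>\<^sub>M lborel)"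
      by measurable
    hence meas: "{p\<in>space (lborel \<Otimes>\<^sub>M lborel). p \<in> B \<times> ({0..1} - B) \<longrightarrow> W (fst p) (snd p) = 0} \<in> sets (lborel \<Otimes>\<^sub>M lborel)"
      using eqset by simp
    have "AE x in lborel. AE y in lborel. (x, y) \<in> B \<times> ({0..1} - B) \<longrightarrow> W (fst (x, y)) (snd (x, y)) = 0"
    proof (rule AE_I2)
      fix x :: real assume "x \<in> space lborel"
      show "AE y in lborel. (x, y) \<in> B \<times> ({0..1} - B) \<longrightarrow> W (fst (x, y)) (snd (x, y)) = 0"
      proof (cases "x \<in> B")
        case False thus ?thesis by simp
      next
        case True
        hence xA: "x \<in> A" "x \<in> {0..1}" using B Bl by auto
        hence "(\<integral>y. W y x \<partial>M) = 0" unfolding A_def by simp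
        moreover have "AE y in M. 0 \<le> W y x" using nonneg xA by (auto intro!: AE_I2)
        ultimately have "AE y in M. W y x = 0"
          using integral_nonneg_eq_0_iff_AE[OF Wy_int[OF xA(2)]] by simp
        hence "AE y in lborel. y \<in> {0..1} \<longrightarrow> W y x = 0"
          unfolding M_def by (subst (asm) AE_restrict_space_iff) auto
        thus ?thesis
          by eventually_elim (use xA symW in auto)
      qed
    qed
    hence "AE p in lborel \<Otimes>\<^sub>M lborel. p \<in> B \<times> ({0..1} - B) \<longrightarrow> W (fst p) (snd p) = 0"
      by (intro pair_sigma_finite.AE_pair_measure[OF PSF meas])
    with irr Bl mB B show False unfolding irreducible_graphon_def by auto
  qed
  define A1 where "A1 = A \<inter> {0..1/2}"
  define A2 where "A2 = A \<inter> {1/2..1}"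
  have A12: "A1 \<in> sets M" "A2 \<in> sets M" "A1 \<subseteq> A" "A2 \<subseteq> A"
    using Asets sets_iff unfolding A1_def A2_def by auto
  have "A = A1 \<union> A2" unfolding A1_def A2_def A_def by auto
  hence "measure M A \<le> measure M A1 + measure M A2"
    using measure_subadditive[OF A12(1,2)] by simp
  moreover have "measure M A1 \<le> 1/2"
  proof -
    have "measure M A1 \<le> measure M {0..1/2}"
      using A12 sets_iff by (intro P.finite_measure_mono) (auto simp: A1_def)
    also have "measure M {0..1/2} = 1/2"
      unfolding M_def by (subst measure_restrict_space) auto
    finally show ?thesis .
  qed
  moreover have "measure M A2 \<le> 1/2"
  proof -
    have "measure M A2 \<le> measure M {1/2..1}"
      using A12 sets_iff by (intro P.finite_measure_mono) (auto simp: A2_def)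
    also have "measure M {1/2..1} = 1/2"
      unfolding M_def by (subst measure_restrict_space) auto
    finally show ?thesis .
  qed
  ultimately show False
    using key[OF A12(1) A12(3)] key[OF A12(2) A12(4)] mA by linarith
qed


lemma binom_exp:
  fixes t B :: real
  shows "2*(1 - t/B)^K = (\<Sum>j\<le>K. (2 * of_nat (K choose j) * (-1/B)^j) * t^j)"
proof -
  have "1 - t/B = (-1/B) * t + 1" by simp
  hence "(1 - t/B)^K = ((-1/B) * t + 1)^K" by simp
  also have "\<dots> = (\<Sum>j\<le>K. of_nat (K choose j) * ((-1/B) * t)^j * 1^(K-j))"
    by (rule binomial_ring)
  finally show ?thesis
  proof -
    assume h: "(1 - t / B) ^ K = (\<Sum>j\<le>K. of_nat (K choose j) * ((-1/B) * t)^j * 1^(K-j))"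
    have "(-1/B) * t = - (t/B)" by simp
    show ?thesis unfolding h sum_distrib_left
      by (intro sum.cong refl) (simp add: power_mult_distrib[symmetric])
  qed
qed

theorem lemma11:
  fixes \<beta> :: "nat \<Rightarrow> nat \<Rightarrow> nat \<Rightarrow> real"
    and W :: "real \<Rightarrow> real \<Rightarrow> real"
    and k :: nat
  assumes "\<And>n. weighted_graph n (\<beta> n)"
    and "bdd_above {\<beta> n i j | n i j. i < n \<and> j < n}"
    and "graphon W"
    and "irreducible_graphon W"
    and "graph_seq_converges \<beta> W"
    and "k \<ge> 2"
  shows "\<exists>\<sigma>>0. \<exists>N. \<forall>n\<ge>N.
           real (card {v. v < n \<and> wdeg n (\<beta> n) v < 50 * real k * beta_max \<beta> * \<sigma> * real n})
             \<le> real n / (10 * beta_max \<beta>)"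
proof -
  note wg = assms(1) and bdd = assms(2) and g = assms(3) and irr = assms(4) and conv = assms(5)
  define bm where "bm = beta_max \<beta>"
  have ble: "\<beta> n i j \<le> bm" if "i < n" "j < n" for n i j
    unfolding bm_def beta_max_def by (rule cSup_upper[OF _ bdd]) (use that in blast)
  have bnn: "0 \<le> \<beta> n i j" if "i < n" "j < n" for n i j
    using wg[of n] that unfolding weighted_graph_def by auto
  have bm0: "0 \<le> bm" using ble[of 0 1 0] bnn[of 0 1 0] by simp
  have wdnn: "0 \<le> wdeg n (\<beta> n) v" if "v < n" for n v
    unfolding wdeg_def using bnn that by (intro sum_nonneg) auto
  have wdle: "wdeg n (\<beta> n) v \<le> real n * bm" if "v < n" for n v
  proof -
    have "wdeg n (\<beta> n) v \<le> (\<Sum>w<n. bm)" unfolding wdeg_def using ble that by (intro sum_mono) auto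
    thus ?thesis by simp
  qed
  show ?thesis
  proof (cases "bm = 0")
    case True
    have "{v. v < n \<and> wdeg n (\<beta> n) v < 50 * real k * beta_max \<beta> * 1 * real n} = {}" for n
      using wdnn True unfolding bm_def by force
    hence "real (card {v. v < n \<and> wdeg n (\<beta> n) v < 50 * real k * beta_max \<beta> * 1 * real n})
             \<le> real n / (10 * beta_max \<beta>)" for n
      using True unfolding bm_def by simp
    thus ?thesis by (intro exI[of _ 1]) auto
  next
    case False
    hence bmpos: "0 < bm" using bm0 by simp
    define \<delta> where "\<delta> = 1 / (10 * bm)"
    have \<delta>pos: "0 < \<delta>" unfolding \<delta>_def using bmpos by simp
    define M where "M = restrict_space lborel {0..1::real}"
    interpret P: prob_space M unfolding M_def by (rule M_prob)
    have spM[simp]: "space M = {0..1}" unfolding M_def by simp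
    define d where "d x = (\<integral>y. W y x \<partial>M)" for x
    have nonneg: "0 \<le> W x y" if "x \<in> {0..1}" "y \<in> {0..1}" for x y
      using g that unfolding graphon_def by auto
    obtain Bw where Bw: "\<And>x y. x \<in> {0..1} \<Longrightarrow> y \<in> {0..1} \<Longrightarrow> W x y \<le> Bw"
      using g unfolding graphon_def by blast
    have Wm[measurable]: "(\<lambda>p. W (fst p) (snd p)) \<in> borel_measurable (M \<Otimes>\<^sub>M M)"
      unfolding M_def by (rule Wm_meas[OF g])
    have Wsw: "case_prod (\<lambda>x y. W y x) \<in> borel_measurable (M \<Otimes>\<^sub>M M)"
    proof -
      have "(\<lambda>p. (snd p, fst p)) \<in> measurable (M \<Otimes>\<^sub>M M) (M \<Otimes>\<^sub>M M)" by measurable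
      from measurable_comp[OF this Wm] show ?thesis by (simp add: comp_def case_prod_beta)
    qed
    have d_meas[measurable]: "d \<in> borel_measurable M"
      unfolding d_def using P.borel_measurable_lebesgue_integral[OF Wsw] .
    have dnn: "0 \<le> d x" if "x \<in> {0..1}" for x
      unfolding d_def using that nonneg by (intro integral_nonneg_AE) (auto intro!: AE_I2)
    have dle: "d x \<le> Bw" if "x \<in> {0..1}" for x
    proof -
      have Wy_meas: "(\<lambda>y. W y x) \<in> borel_measurable M"
      proof -
        have "(\<lambda>y. (y, x)) \<in> measurable M (M \<Otimes>\<^sub>M M)" using that by (intro measurable_Pair2') auto
        from measurable_comp[OF this Wm] show ?thesis by (simp add: comp_def)
      qed
      have "d x \<le> (\<integral>y. Bw \<partial>M)" unfolding d_def
        by (rule integral_mono) (use that nonneg Bw Wy_meas in \<open>auto intro!: P.integrable_const_bound[where B=Bw]\<close>)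
      also have "\<dots> = Bw" using P.prob_space by simp
      finally show ?thesis .
    qed
    have dpos: "AE x in M. 0 < d x" unfolding d_def M_def by (rule d_pos[OF g irr])
    define B where "B = max bm Bw + 1"
    have Bpos: "0 < B" and bmB: "bm < B" and BwB: "Bw < B" unfolding B_def using bm0 by auto
    have d01: "0 \<le> 1 - d x / B \<and> 1 - d x / B \<le> 1" if "x \<in> {0..1}" for x
      using dnn[OF that] dle[OF that] Bpos BwB by (auto simp: field_simps)
    have "integrable M (\<lambda>_. 1::real)" by simp
    have nb: "AE x in M. norm ((1 - d x / B)^K) \<le> 1" for K
    proof (rule AE_I2)
      fix x assume "x \<in> space M"
      hence h: "0 \<le> 1 - d x / B" "1 - d x / B \<le> 1" using d01 by auto
      have "norm ((1 - d x / B)^K) = (1 - d x / B)^K" using h by simp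
      also have "\<dots> \<le> 1" using h by (intro power_le_one)
      finally show "norm ((1 - d x / B)^K) \<le> 1" .
    qed
    have AEconv: "AE x in M. (\<lambda>K. (1 - d x / B)^K) \<longlonglongrightarrow> 0"
    proof -
      have "AE x in M. 0 < d x \<longrightarrow> (\<lambda>K. (1 - d x / B)^K) \<longlonglongrightarrow> 0"
      proof (rule AE_I2, rule impI)
        fix x assume x: "x \<in> space M" and dx: "0 < d x"
        have h: "0 \<le> 1 - d x / B" using d01 x by auto
        have "d x / B > 0" using dx Bpos by simp
        hence "norm (1 - d x / B) < 1" using h by simp
        thus "(\<lambda>K. (1 - d x / B)^K) \<longlonglongrightarrow> 0" by (rule LIMSEQ_power_zero)
      qed
      with dpos show ?thesis by (auto elim: AE_mp)
    qed
    have lim0: "(\<lambda>K. \<integral>x. (1 - d x / B)^K \<partial>M) \<longlonglongrightarrow> (\<integral>x. 0 \<partial>M)"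
      by (rule integral_dominated_convergence[where w="\<lambda>_. 1", OF _ _ _ AEconv nb]) auto
    hence "(\<lambda>K. \<integral>x. (1 - d x / B)^K \<partial>M) \<longlonglongrightarrow> 0" by simp
    from order_tendstoD(2)[OF this, of "\<delta>/4"] \<delta>pos
    obtain K where K: "(\<integral>x. (1 - d x / B)^K \<partial>M) < \<delta>/4"
      by (auto simp: eventually_sequentially)
    define \<epsilon> where "\<epsilon> = B / (2 * (real K + 1))"
    have \<epsilon>pos: "0 < \<epsilon>" unfolding \<epsilon>_def using Bpos by simp
    define p where "p t = 2 * (1 - t / B)^K" for t
    have pge1: "1 \<le> p t" if "0 \<le> t" "t < \<epsilon>" for t
    proof -
      have tB: "t / B \<le> 1 / (2 * (real K + 1))" using that Bpos unfolding \<epsilon>_def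
        by (simp add: field_simps)
      have tB0: "0 \<le> t / B" using that Bpos by simp
      have "-1 \<le> - (t / B)" using tB tB0 by (smt (verit) divide_le_eq_1_pos of_nat_0_le_iff)
      from Bernoulli_inequality[OF this, of K]
      have "1 + real K * (- (t / B)) \<le> (1 + - (t / B))^K" .
      moreover have "real K * (t / B) \<le> 1/2"
      proof -
        have "real K * (t / B) \<le> real K * (1 / (2 * (real K + 1)))" using tB by (intro mult_left_mono) auto
        also have "\<dots> \<le> 1/2" by (simp add: field_simps)
        finally show ?thesis .
      qed
      ultimately show ?thesis unfolding p_def by simp
    qed
    have pnn: "0 \<le> p t" if "t \<le> B" for t
      unfolding p_def using that Bpos by simp
    define c where "c j = 2 * of_nat (K choose j) * (-1/B)^j" for j
    have pexp: "p t = (\<Sum>j\<le>K. c j * t^j)" for t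
      unfolding p_def c_def by (rule binom_exp)
    define E where "E j = (\<lambda>i. (i,j)) ` {..<j}" for j :: nat
    have sg: "simple_graph (Suc j) (E j)" for j
      unfolding simple_graph_def E_def by auto
    have Sconv: "(\<lambda>n. (\<Sum>a<n. (wdeg n (\<beta> n) a / real n)^j) / real n) \<longlonglongrightarrow> (\<integral>x. d x ^ j \<partial>M)" for j
    proof -
      have "(\<lambda>n. hom_density_graph (Suc j) (E j) n (\<beta> n)) \<longlonglongrightarrow> hom_density_graphon (Suc j) (E j) W"
        using conv sg unfolding graph_seq_converges_def by blast
      thus ?thesis
        unfolding E_def graph_star[OF wg] graphon_star[OF g] d_def M_def .
    qed
    define Q where "Q n = (\<Sum>a<n. p (wdeg n (\<beta> n) a / real n)) / real n" for n
    have Qeq: "Q n = (\<Sum>j\<le>K. c j * ((\<Sum>a<n. (wdeg n (\<beta> n) a / real n)^j) / real n))" for n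
      unfolding Q_def pexp sum_divide_distrib
      by (subst sum.swap) (simp add: sum_distrib_left sum_divide_distrib)
    have Qconv: "Q \<longlonglongrightarrow> (\<Sum>j\<le>K. c j * (\<integral>x. d x ^ j \<partial>M))"
      unfolding Qeq by (intro tendsto_sum tendsto_mult tendsto_const Sconv)
    have dj_int: "integrable M (\<lambda>x. d x ^ j)" for j
    proof (rule P.integrable_const_bound[where B="Bw^j"])
      show "AE x in M. norm (d x ^ j) \<le> Bw^j"
        by (rule AE_I2) (use dnn dle in \<open>auto simp: abs_of_nonneg intro!: power_mono\<close>)
    qed measurable
    have "(\<Sum>j\<le>K. c j * (\<integral>x. d x ^ j \<partial>M)) = (\<integral>x. (\<Sum>j\<le>K. c j * d x ^ j) \<partial>M)"
    proof -
      have "(\<integral>x. (\<Sum>j\<le>K. c j * d x ^ j) \<partial>M) = (\<Sum>j\<le>K. \<integral>x. c j * d x ^ j \<partial>M)"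
        by (rule Bochner_Integration.integral_sum[where f="\<lambda>j x. c j * d x ^ j"]) (auto intro!: integrable_mult_right dj_int)
      thus ?thesis by simp
    qed
    also have "\<dots> = (\<integral>x. 2 * (1 - d x / B)^K \<partial>M)"
      using pexp unfolding p_def by simp
    also have "\<dots> = 2 * (\<integral>x. (1 - d x / B)^K \<partial>M)" by simp
    finally have limv: "(\<Sum>j\<le>K. c j * (\<integral>x. d x ^ j \<partial>M)) < \<delta>" using K \<delta>pos by linarith
    from order_tendstoD(2)[OF Qconv limv]
    obtain N where N: "\<And>n. n \<ge> N \<Longrightarrow> Q n < \<delta>" by (auto simp: eventually_sequentially)
    define \<sigma> where "\<sigma> = \<epsilon> / (50 * real k * bm)"
    have kpos: "0 < real k" using assms(6) by simp
    have \<sigma>pos: "0 < \<sigma>" unfolding \<sigma>_def using \<epsilon>pos kpos bmpos by simp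
    have \<sigma>eq: "50 * real k * bm * \<sigma> = \<epsilon>" unfolding \<sigma>_def using kpos bmpos by simp
    show ?thesis
    proof (intro exI[of _ \<sigma>] conjI \<sigma>pos exI[of _ N] allI impI)
      fix n assume n: "N \<le> n"
      define S where "S = {v. v < n \<and> wdeg n (\<beta> n) v < 50 * real k * beta_max \<beta> * \<sigma> * real n}"
      have S_eq: "S = {v. v < n \<and> wdeg n (\<beta> n) v < \<epsilon> * real n}"
        unfolding S_def bm_def[symmetric] \<sigma>eq ..
      have "real (card S) \<le> real n / (10 * bm)"
      proof (cases "n = 0")
        case True
        hence "S = {}" unfolding S_eq by auto
        thus ?thesis using True by simp
      next
        case False
        hence npos: "0 < real n" by simp
        have Ssub: "S \<subseteq> {..<n}" unfolding S_eq by auto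
        have finS: "finite S" using Ssub finite_subset by blast
        have "real (card S) = (\<Sum>a\<in>S. 1)" by simp
        also have "\<dots> \<le> (\<Sum>a\<in>S. p (wdeg n (\<beta> n) a / real n))"
        proof (rule sum_mono)
          fix a assume a: "a \<in> S"
          hence "a < n" "wdeg n (\<beta> n) a < \<epsilon> * real n" unfolding S_eq by auto
          hence "wdeg n (\<beta> n) a / real n < \<epsilon>" using npos by (simp add: divide_less_eq)
          moreover have "0 \<le> wdeg n (\<beta> n) a / real n" using wdnn[OF \<open>a < n\<close>] by simp
          ultimately show "1 \<le> p (wdeg n (\<beta> n) a / real n)" by (intro pge1)
        qed
        also have "\<dots> \<le> (\<Sum>a<n. p (wdeg n (\<beta> n) a / real n))"
        proof (rule sum_mono2[OF _ Ssub])
          fix a assume "a \<in> {..<n} - S"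
          hence a: "a < n" by simp
          have "wdeg n (\<beta> n) a / real n \<le> bm"
            using wdle[OF a] npos by (simp add: divide_le_eq mult.commute)
          thus "0 \<le> p (wdeg n (\<beta> n) a / real n)" using bmB by (intro pnn) simp
        qed simp
        also have "\<dots> = real n * Q n" unfolding Q_def using npos by simp
        also have "\<dots> \<le> real n * \<delta>" using N[OF n] npos by simp
        also have "\<dots> = real n / (10 * bm)" unfolding \<delta>_def by simp
        finally show ?thesis .
      qed
      thus "real (card {v. v < n \<and> wdeg n (\<beta> n) v < 50 * real k * beta_max \<beta> * \<sigma> * real n})
             \<le> real n / (10 * beta_max \<beta>)"
        unfolding S_def bm_def .
    qed
  qed
qed

end
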